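(* There is a function $\varepsilon(n)\to 0$ as $n\to\infty$ such that for every $n\ge 4$, the number of pairwise non-equivalent quadrilateral embeddings of $L_n$ (equivalently, embeddings of $K_n^3$ in surfaces of Euler genus $\frac{(n-2)(n+3)(n-4)}{12}$) is at most $2^{(\frac14+\varepsilon(n))\,n^3\log_2 n}$.
   Context: $K_n^3$ is the complete $3$-uniform hypergraph on $[n]$; an embedding of $K_n^3$ is a 2-cell embedding of its Levi graph $L_n$, the bipartite graph with vertex set $[n]\sqcup\binom{[n]}{3}$ in which $i$ is adjacent to triple $t$ iff $i\in t$. A quadrilateral embedding is a 2-cell embedding in which every face is bounded by a closed walk of length $4$. The Euler genus of the orientable surface of genus $h$ is $2h$ and of the non-orientable surface with $c$ crosscaps is $c$. Two embeddings $\phi_1,\phi_2$ in a surface $S$ are equivalent if $\phi_2=h\phi_1$ for a homeomorphism $h:S\to S$. *)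

theory Defs
  imports "HOL-Analysis.Analysis"
begin

text \<open>An embedding scheme is a pair (rho, lam): rho v is a cyclic permutation of the
  neighbourhood of v (identity elsewhere; identity for v outside V), and lam u v
  is the edge signature (True = negative / twisted edge), symmetric and False on non-edges.\<close>

definition nbrs :: "('v \<Rightarrow> 'v \<Rightarrow> bool) \<Rightarrow> 'v \<Rightarrow> 'v set" where
  "nbrs adj v = {w. adj v w}"

definition cyclic_perm_on :: "'v set \<Rightarrow> ('v \<Rightarrow> 'v) \<Rightarrow> bool" where
  "cyclic_perm_on N f \<longleftrightarrow> bij_betw f N N \<and> (\<forall>x. x \<notin> N \<longrightarrow> f x = x)
     \<and> (\<forall>x\<in>N. \<forall>y\<in>N. \<exists>k. (f ^^ k) x = y)"

definition schemes :: "'v set \<Rightarrow> ('v \<Rightarrow> 'v \<Rightarrow> bool)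
    \<Rightarrow> (('v \<Rightarrow> 'v \<Rightarrow> 'v) \<times> ('v \<Rightarrow> 'v \<Rightarrow> bool)) set" where
  "schemes V adj = {(rho, lam).
      (\<forall>v\<in>V. cyclic_perm_on (nbrs adj v) (rho v)) \<and> (\<forall>v. v \<notin> V \<longrightarrow> rho v = id)
    \<and> (\<forall>u v. lam u v = lam v u) \<and> (\<forall>u v. \<not> adj u v \<longrightarrow> \<not> lam u v)}"

definition rev_rot :: "'v set \<Rightarrow> ('v \<Rightarrow> 'v) \<Rightarrow> 'v \<Rightarrow> 'v" where
  "rev_rot N f = (\<lambda>x. if x \<in> N then inv_into N f x else x)"

text \<open>Face tracing: a state is a dart (u,v) together with the current sign s
  (True = negative). Faces correspond to the orbits of this permutation (each face to
  two mutually reverse orbits), and the length of a face equals the orbit size.\<close>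
definition face_step :: "('v \<Rightarrow> 'v \<Rightarrow> bool) \<Rightarrow> (('v \<Rightarrow> 'v \<Rightarrow> 'v) \<times> ('v \<Rightarrow> 'v \<Rightarrow> bool))
    \<Rightarrow> 'v \<times> 'v \<times> bool \<Rightarrow> 'v \<times> 'v \<times> bool" where
  "face_step adj sch st = (case sch of (rho, lam) \<Rightarrow> (case st of (u, v, s) \<Rightarrow>
     (let s' = (s \<noteq> lam u v) in
      (v, (if s' then rev_rot (nbrs adj v) (rho v) u else rho v u), s'))))"

definition quadrilateral :: "('v \<Rightarrow> 'v \<Rightarrow> bool) \<Rightarrow> (('v \<Rightarrow> 'v \<Rightarrow> 'v) \<times> ('v \<Rightarrow> 'v \<Rightarrow> bool)) \<Rightarrow> bool" where
  "quadrilateral adj sch \<longleftrightarrow> (\<forall>u v s. adj u v \<longrightarrow>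
      (face_step adj sch ^^ 4) (u, v, s) = (u, v, s) \<and> (face_step adj sch ^^ 2) (u, v, s) \<noteq> (u, v, s))"

definition switch :: "('v \<Rightarrow> 'v \<Rightarrow> bool) \<Rightarrow> 'v set \<Rightarrow> (('v \<Rightarrow> 'v \<Rightarrow> 'v) \<times> ('v \<Rightarrow> 'v \<Rightarrow> bool))
    \<Rightarrow> (('v \<Rightarrow> 'v \<Rightarrow> 'v) \<times> ('v \<Rightarrow> 'v \<Rightarrow> bool))" where
  "switch adj U sch = (case sch of (rho, lam) \<Rightarrow>
     ((\<lambda>v. if v \<in> U then rev_rot (nbrs adj v) (rho v) else rho v),
      (\<lambda>u v. adj u v \<and> (lam u v \<noteq> ((u \<in> U) \<noteq> (v \<in> U))))))"

text \<open>Equivalence of embeddings (= equivalence up to homeomorphism of the surface).\<close>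
definition emb_equiv :: "'v set \<Rightarrow> ('v \<Rightarrow> 'v \<Rightarrow> bool)
    \<Rightarrow> ((('v \<Rightarrow> 'v \<Rightarrow> 'v) \<times> ('v \<Rightarrow> 'v \<Rightarrow> bool)) \<times> (('v \<Rightarrow> 'v \<Rightarrow> 'v) \<times> ('v \<Rightarrow> 'v \<Rightarrow> bool))) set" where
  "emb_equiv V adj = {(a, b). a \<in> schemes V adj \<and> b \<in> schemes V adj \<and> (\<exists>U. U \<subseteq> V \<and> b = switch adj U a)}"

definition num_quad_embeddings :: "'v set \<Rightarrow> ('v \<Rightarrow> 'v \<Rightarrow> bool) \<Rightarrow> nat" where
  "num_quad_embeddings V adj =
     card ({sch \<in> schemes V adj. quadrilateral adj sch} // emb_equiv V adj)"

section \<open>The Levi graph L_n of the complete 3-uniform hypergraph on [n] = {1..n}\<close>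

definition triples :: "nat \<Rightarrow> nat set set" where
  "triples n = {t. t \<subseteq> {1..n} \<and> card t = 3}"

definition levi_V :: "nat \<Rightarrow> (nat + nat set) set" where
  "levi_V n = Inl ` {1..n} \<union> Inr ` triples n"

definition levi_adj :: "nat \<Rightarrow> (nat + nat set) \<Rightarrow> (nat + nat set) \<Rightarrow> bool" where
  "levi_adj n x y \<longleftrightarrow> (\<exists>i t. i \<in> {1..n} \<and> t \<in> triples n \<and> i \<in> t \<and>
       ((x = Inl i \<and> y = Inr t) \<or> (x = Inr t \<and> y = Inl i)))"

end

theory Submission
  imports Defs "HOL-Real_Asymp.Real_Asymp" "HOL-Combinatorics.Permutations"
begin

lemma cyc_N: "cyclic_perm_on N f \<Longrightarrow> x \<in> N \<Longrightarrow> f x \<in> N"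
  unfolding cyclic_perm_on_def by (meson bij_betw_apply)

lemma cyc_pow_fix: "f x = x \<Longrightarrow> (f ^^ k) x = x"
  by (induction k) auto

lemma cyc_fix:
  assumes c: "cyclic_perm_on N f" and "2 \<le> card N" and x: "x \<in> N"
  shows "f x \<noteq> x"
proof
  assume fx: "f x = x"
  have "\<exists>y\<in>N. y \<noteq> x"
  proof (rule ccontr)
    assume "\<not> (\<exists>y\<in>N. y \<noteq> x)"
    then have "N \<subseteq> {x}" by auto
    then have "card N \<le> card {x}" by (intro card_mono) auto
    then have "card N \<le> 1" by simp
    with assms(2) show False by simp
  qed
  then obtain y where y: "y \<in> N" "y \<noteq> x" by blast
  from c x y obtain k where "(f ^^ k) x = y" unfolding cyclic_perm_on_def by blast
  with cyc_pow_fix[of f x k, OF fx] y show False by simp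
qed

lemma cyc_pow2: "f (f x) = x \<Longrightarrow> (f ^^ k) x \<in> {x, f x}"
  by (induction k) auto

lemma cyc_2:
  assumes c: "cyclic_perm_on N f" and "3 \<le> card N" and x: "x \<in> N"
  shows "f (f x) \<noteq> x"
proof
  assume fx: "f (f x) = x"
  have "N \<subseteq> {x, f x}"
  proof
    fix y assume "y \<in> N"
    with c x obtain k where "(f ^^ k) x = y" unfolding cyclic_perm_on_def by blast
    with cyc_pow2[of f x k, OF fx] show "y \<in> {x, f x}" by auto
  qed
  then have "card N \<le> card {x, f x}" by (intro card_mono) auto
  also have "\<dots> \<le> 2" by (simp add: card_insert_le_m1)
  finally show False using assms(2) by simp
qed

lemma rev_rot_prop:
  assumes c: "cyclic_perm_on N f" and u: "u \<in> N"
  shows "rev_rot N f u \<in> N \<and> f (rev_rot N f u) = u"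
proof -
  have b: "bij_betw f N N" using c unfolding cyclic_perm_on_def by blast
  then have "f ` N = N" by (simp add: bij_betw_def)
  then have "u \<in> f ` N" using u by simp
  then show ?thesis using u unfolding rev_rot_def
    by (simp add: f_inv_into_f inv_into_into)
qed

lemma step_gen:
  assumes c: "cyclic_perm_on N f" and "2 \<le> card N" and u: "u \<in> N"
  shows "(if b then rev_rot N f u else f u) \<in> N \<and> (if b then rev_rot N f u else f u) \<noteq> u
     \<and> ((if b then rev_rot N f u else f u) = f u \<or> f (if b then rev_rot N f u else f u) = u)"
proof (cases b)
  case True
  then show ?thesis using rev_rot_prop[OF c u] cyc_fix[OF c assms(2) u] by auto
next
  case False
  then show ?thesis using cyc_N[OF c u] cyc_fix[OF c assms(2) u] by auto
qed

lemma cyc_inj: "cyclic_perm_on N f \<Longrightarrow> inj_on f N"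
  unfolding cyclic_perm_on_def bij_betw_def by blast

lemma uniq:
  assumes cf: "cyclic_perm_on N f" and cg: "cyclic_perm_on N g" and c3: "3 \<le> card N"
    and eq: "(\<lambda>x. {x, f x}) ` N = (\<lambda>x. {x, g x}) ` N"
    and x0: "x0 \<in> N" and fx0: "f x0 = g x0"
  shows "f = g"
proof -
  have pow: "(f ^^ k) x0 = (g ^^ k) x0 \<and> (f ^^ Suc k) x0 = (g ^^ Suc k) x0" for k
  proof (induction k)
    case 0
    then show ?case using fx0 by simp
  next
    case (Suc k)
    define y where "y = (f ^^ k) x0"
    define z where "z = f y"
    have yN: "y \<in> N" unfolding y_def
      by (induction k) (auto simp: x0 cyc_N[OF cf])
    have zN: "z \<in> N" unfolding z_def using cyc_N[OF cf yN] .
    have IH1: "(f ^^ k) x0 = (g ^^ k) x0" and IH2: "(f ^^ Suc k) x0 = (g ^^ Suc k) x0"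
      using Suc.IH by blast+
    have "z = (f ^^ Suc k) x0" unfolding z_def y_def by simp
    also have "\<dots> = (g ^^ Suc k) x0" by (rule IH2)
    also have "\<dots> = g ((g ^^ k) x0)" by simp
    also have "\<dots> = g y" unfolding y_def using IH1 by simp
    finally have zg: "z = g y" .
    have "{z, f z} \<in> (\<lambda>x. {x, g x}) ` N" using eq zN by blast
    then obtain w where wN: "w \<in> N" and zw: "{z, f z} = {w, g w}" by blast
    have "f z = g z"
    proof (cases "z = w \<and> f z = g w")
      case True then show ?thesis by metis
    next
      case False
      with zw have "z = g w" "f z = w" by (auto simp: doubleton_eq_iff)
      then have "g w = g y" using zg by simp
      then have "w = y" using cyc_inj[OF cg] wN yN by (meson inj_onD)
      then have "f (f y) = y" using \<open>f z = w\<close> z_def by simp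
      with cyc_2[OF cf c3 yN] show ?thesis by simp
    qed
    then show ?case using IH2 zg unfolding z_def y_def by simp
  qed
  show ?thesis
  proof
    fix x
    show "f x = g x"
    proof (cases "x \<in> N")
      case True
      with cf x0 obtain k where "(f ^^ k) x0 = x" unfolding cyclic_perm_on_def by blast
      then have xk: "(f ^^ k) x0 = x" .
      have "f x = (f ^^ Suc k) x0" using xk by auto
      also have "\<dots> = (g ^^ Suc k) x0" using pow[of k] by blast
      also have "\<dots> = g ((g ^^ k) x0)" by simp
      also have "\<dots> = g x" using pow[of k] xk by metis
      finally show ?thesis .
    next
      case False
      then show ?thesis using cf cg unfolding cyclic_perm_on_def by simp
    qed
  qed
qed


section \<open>Levi graph facts\<close>

lemma finite_T: "finite (triples n)"
proof -
  have "triples n \<subseteq> Pow {1..n}" unfolding triples_def by auto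
  then show ?thesis by (rule finite_subset) simp
qed

lemma T_fin: "t \<in> triples n \<Longrightarrow> finite t"
  unfolding triples_def using finite_subset[of t "{1..n}"] by auto

lemma T_sub: "t \<in> triples n \<Longrightarrow> t \<subseteq> {1..n}" and T_card: "t \<in> triples n \<Longrightarrow> card t = 3"
  unfolding triples_def by auto

lemma adj_sym: "levi_adj n x y = levi_adj n y x"
  unfolding levi_adj_def by blast

lemma Inr_nbrs_Inl: "Inr t \<in> nbrs (levi_adj n) (Inl a) \<longleftrightarrow> a \<in> {1..n} \<and> t \<in> triples n \<and> a \<in> t"
  unfolding nbrs_def levi_adj_def by auto

lemma Inl_nbrs_Inl: "Inl b \<notin> nbrs (levi_adj n) (Inl a)"
  unfolding nbrs_def levi_adj_def by auto

lemma Inl_nbrs_Inr: "Inl a \<in> nbrs (levi_adj n) (Inr t) \<longleftrightarrow> a \<in> {1..n} \<and> t \<in> triples n \<and> a \<in> t"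
  unfolding nbrs_def levi_adj_def by auto

lemma Inr_nbrs_Inr: "Inr b \<notin> nbrs (levi_adj n) (Inr a)"
  unfolding nbrs_def levi_adj_def by auto

lemma nbrs_Inl_eq: "nbrs (levi_adj n) (Inl a) = Inr ` {t \<in> triples n. a \<in> t}"
proof (intro set_eqI iffI)
  fix x assume "x \<in> nbrs (levi_adj n) (Inl a)"
  then show "x \<in> Inr ` {t \<in> triples n. a \<in> t}"
    by (cases x) (auto simp: Inl_nbrs_Inl Inr_nbrs_Inl)
next
  fix x :: "nat + nat set" assume "x \<in> Inr ` {t \<in> triples n. a \<in> t}"
  then obtain t where "x = Inr t" "t \<in> triples n" "a \<in> t" by blast
  moreover have "a \<in> {1..n}" using T_sub calculation by blast
  ultimately show "x \<in> nbrs (levi_adj n) (Inl a)" by (simp add: Inr_nbrs_Inl)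
qed

lemma nbrs_Inr_eq: "t \<in> triples n \<Longrightarrow> nbrs (levi_adj n) (Inr t) = Inl ` t"
proof (intro set_eqI iffI)
  fix x assume "t \<in> triples n" "x \<in> nbrs (levi_adj n) (Inr t)"
  then show "x \<in> Inl ` t"
    by (cases x) (auto simp: Inl_nbrs_Inr Inr_nbrs_Inr)
next
  fix x :: "nat + nat set" assume t: "t \<in> triples n" "x \<in> Inl ` t"
  then obtain a where "x = Inl a" "a \<in> t" by blast
  moreover have "a \<in> {1..n}" using T_sub t calculation by blast
  ultimately show "x \<in> nbrs (levi_adj n) (Inr t)" using t by (simp add: Inl_nbrs_Inr)
qed

lemma card_nbrs_Inr: "t \<in> triples n \<Longrightarrow> card (nbrs (levi_adj n) (Inr t)) = 3"
  by (simp add: nbrs_Inr_eq card_image T_card)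

lemma finite_nbrs_Inl: "finite (nbrs (levi_adj n) (Inl a))"
  unfolding nbrs_Inl_eq using finite_T by simp

lemma bij_nbrs_Inl:
  assumes a: "a \<in> {1..n}"
  shows "bij_betw (insert a) {S. S \<subseteq> {1..n} - {a} \<and> card S = 2} {t \<in> triples n. a \<in> t}"
proof (rule bij_betw_byWitness[where f' = "\<lambda>t. t - {a}"])
  show "\<forall>S\<in>{S. S \<subseteq> {1..n} - {a} \<and> card S = 2}. insert a S - {a} = S" by auto
  show "\<forall>t\<in>{t \<in> triples n. a \<in> t}. insert a (t - {a}) = t" by auto
  show "insert a ` {S. S \<subseteq> {1..n} - {a} \<and> card S = 2} \<subseteq> {t \<in> triples n. a \<in> t}"
  proof
    fix t assume "t \<in> insert a ` {S. S \<subseteq> {1..n} - {a} \<and> card S = 2}"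
    then obtain S where S: "S \<subseteq> {1..n} - {a}" "card S = 2" "t = insert a S" by blast
    then have "finite S" using card.infinite by fastforce
    then have "card t = 3" using S by (auto simp: card_insert_if)
    then show "t \<in> {t \<in> triples n. a \<in> t}" using S a unfolding triples_def by auto
  qed
  show "(\<lambda>t. t - {a}) ` {t \<in> triples n. a \<in> t} \<subseteq> {S. S \<subseteq> {1..n} - {a} \<and> card S = 2}"
  proof
    fix S assume "S \<in> (\<lambda>t. t - {a}) ` {t \<in> triples n. a \<in> t}"
    then obtain t where t: "t \<in> triples n" "a \<in> t" "S = t - {a}" by blast
    then have "card S = 2" using T_card[OF t(1)] by simp
    then show "S \<in> {S. S \<subseteq> {1..n} - {a} \<and> card S = 2}" using t T_sub by auto
  qed
qed

lemma card_nbrs_Inl: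
  assumes a: "a \<in> {1..n}"
  shows "card (nbrs (levi_adj n) (Inl a)) = (n - 1) choose 2"
proof -
  have "card (nbrs (levi_adj n) (Inl a)) = card {t \<in> triples n. a \<in> t}"
    unfolding nbrs_Inl_eq by (simp add: card_image)
  also have "\<dots> = card {S. S \<subseteq> {1..n} - {a} \<and> card S = 2}"
    using bij_betw_same_card[OF bij_nbrs_Inl[OF a]] by simp
  also have "\<dots> = card ({1..n} - {a}) choose 2" by (simp add: n_subsets)
  also have "card ({1..n} - {a}) = n - 1" using a by simp
  finally show ?thesis .
qed

lemma card_nbrs_Inl_ge:
  assumes n4: "4 \<le> n" and a: "a \<in> {1..n}"
  shows "3 \<le> card (nbrs (levi_adj n) (Inl a))"
proof -
  have "(3::nat) * 2 \<le> (n - 1) * (n - 1 - 1)" using n4 by (intro mult_le_mono) auto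
  moreover have "\<And>m::nat. 6 \<le> m \<Longrightarrow> 3 \<le> m div 2" by presburger
  ultimately have "3 \<le> (n - 1) * (n - 1 - 1) div 2" by simp
  then show ?thesis unfolding card_nbrs_Inl[OF a] choose_two .
qed

lemma nbrs_V: "y \<in> nbrs (levi_adj n) v \<Longrightarrow> y \<in> levi_V n"
  unfolding nbrs_def levi_adj_def levi_V_def by auto

lemma InlV: "a \<in> {1..n} \<Longrightarrow> Inl a \<in> levi_V n"
  unfolding levi_V_def by auto

section \<open>The key symmetry of quadrilateral embeddings\<close>

lemma sym:
  assumes n4: "4 \<le> n" and sch: "(rho, lam) \<in> schemes (levi_V n) (levi_adj n)"
    and q: "quadrilateral (levi_adj n) (rho, lam)"
    and a: "a \<in> {1..n}" and x: "x \<in> nbrs (levi_adj n) (Inl a)"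
  shows "\<exists>j\<in>{1..n}. j \<noteq> a \<and> x \<in> nbrs (levi_adj n) (Inl j) \<and> rho (Inl a) x \<in> nbrs (levi_adj n) (Inl j)
           \<and> (rho (Inl j) (rho (Inl a) x) = x \<or> rho (Inl j) x = rho (Inl a) x)"
proof -
  define adj where "adj = levi_adj n"
  define F where "F = face_step adj (rho, lam)"
  have cyc: "\<And>v. v \<in> levi_V n \<Longrightarrow> cyclic_perm_on (nbrs adj v) (rho v)"
    using sch unfolding schemes_def adj_def by auto
  obtain t where xt: "x = Inr t" and t: "t \<in> triples n" "a \<in> t"
    using x unfolding nbrs_Inl_eq by blast
  define s0 where "s0 = lam x (Inl a)"
  define y where "y = rho (Inl a) x"
  have st1: "F (x, Inl a, s0) = (Inl a, y, False)"
    by (simp add: F_def face_step_def s0_def y_def Let_def)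
  have cA: "cyclic_perm_on (nbrs adj (Inl a)) (rho (Inl a))" using cyc InlV[OF a] by blast
  have yN: "y \<in> nbrs adj (Inl a)" unfolding y_def using cyc_N[OF cA] x adj_def by blast
  obtain t' where yt: "y = Inr t'" and t': "t' \<in> triples n" "a \<in> t'"
    using yN unfolding nbrs_Inl_eq adj_def by blast
  have yV: "y \<in> levi_V n" using yN nbrs_V adj_def by blast
  define s2 where "s2 = lam (Inl a) y"
  define z where "z = (if s2 then rev_rot (nbrs adj y) (rho y) (Inl a) else rho y (Inl a))"
  have st2: "F (Inl a, y, False) = (y, z, s2)"
    by (simp add: F_def face_step_def s2_def z_def Let_def)
  have aN: "Inl a \<in> nbrs adj y" using yt t' a by (simp add: Inl_nbrs_Inr adj_def)
  have cy: "cyclic_perm_on (nbrs adj y) (rho y)" using cyc yV by blast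
  have c3y: "2 \<le> card (nbrs adj y)" using card_nbrs_Inr[OF t'(1)] yt adj_def by simp
  have zprop: "z \<in> nbrs adj y \<and> z \<noteq> Inl a"
    using step_gen[OF cy c3y aN, of s2] unfolding z_def by blast
  have "z \<in> Inl ` t'" using zprop yt nbrs_Inr_eq[OF t'(1)] adj_def by simp
  then obtain j where zj: "z = Inl j" and jt: "j \<in> t'" by blast
  have j: "j \<in> {1..n}" "j \<in> t'" "j \<noteq> a" using jt T_sub[OF t'(1)] zprop zj by auto
  have zV: "z \<in> levi_V n" using zj j InlV by simp
  define s3 where "s3 = (s2 \<noteq> lam y z)"
  define w where "w = (if s3 then rev_rot (nbrs adj z) (rho z) y else rho z y)"
  have st3: "F (y, z, s2) = (z, w, s3)"
    by (simp add: F_def face_step_def s3_def w_def Let_def)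
  have yNz: "y \<in> nbrs adj z" using zj yt j t' by (simp add: Inr_nbrs_Inl adj_def)
  have cz: "cyclic_perm_on (nbrs adj z) (rho z)" using cyc zV by blast
  have c3z: "2 \<le> card (nbrs adj z)" using card_nbrs_Inl_ge[OF n4 j(1)] zj adj_def by simp
  have wprop: "w \<in> nbrs adj z \<and> (w = rho z y \<or> rho z w = y)"
    using step_gen[OF cz c3z yNz, of s3] unfolding w_def by blast
  have st4: "fst (F (z, w, s3)) = w"
    by (simp add: F_def face_step_def Let_def)
  have adjx: "adj x (Inl a)" using x adj_sym unfolding nbrs_def adj_def by blast
  have q4: "(F ^^ 4) (x, Inl a, s0) = (x, Inl a, s0)"
    using q adjx unfolding quadrilateral_def F_def adj_def by blast
  have "(F ^^ 4) (x, Inl a, s0) = F (F (F (F (x, Inl a, s0))))"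
    by (simp add: numeral_eq_Suc)
  also have "\<dots> = F (z, w, s3)" using st1 st2 st3 by simp
  finally have "F (z, w, s3) = (x, Inl a, s0)" using q4 by metis
  then have "fst (F (z, w, s3)) = x" by simp
  then have wx: "w = x" using st4 by simp
  have r1: "x \<in> nbrs (levi_adj n) (Inl j)" using wprop wx zj adj_def by simp
  have r2: "rho (Inl a) x \<in> nbrs (levi_adj n) (Inl j)" using yNz zj adj_def y_def by simp
  have r3: "rho (Inl j) (rho (Inl a) x) = x \<or> rho (Inl j) x = rho (Inl a) x"
    using wprop wx zj y_def by auto
  show ?thesis using j r1 r2 r3 by blast
qed


section \<open>Edge sets of the rotations\<close>

definition isQ :: "nat \<Rightarrow> (nat + nat set \<Rightarrow> nat + nat set \<Rightarrow> nat + nat set) \<Rightarrow> (nat + nat set \<Rightarrow> nat + nat set \<Rightarrow> bool) \<Rightarrow> bool" where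
  "isQ n rho lam \<longleftrightarrow> (rho, lam) \<in> schemes (levi_V n) (levi_adj n) \<and> quadrilateral (levi_adj n) (rho, lam)"

definition Aset :: "nat \<Rightarrow> (nat + nat set \<Rightarrow> nat + nat set \<Rightarrow> nat + nat set) \<Rightarrow> nat \<Rightarrow> (nat + nat set) set set" where
  "Aset n rho a = (\<lambda>x. {x, rho (Inl a) x}) ` nbrs (levi_adj n) (Inl a)"

definition Eset :: "nat \<Rightarrow> (nat + nat set \<Rightarrow> nat + nat set \<Rightarrow> nat + nat set) \<Rightarrow> (nat + nat set) set set" where
  "Eset n rho = (\<Union>a\<in>{1..n}. Aset n rho a)"

lemma cycA: "(rho, lam) \<in> schemes (levi_V n) (levi_adj n) \<Longrightarrow> a \<in> {1..n}
   \<Longrightarrow> cyclic_perm_on (nbrs (levi_adj n) (Inl a)) (rho (Inl a))"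
  unfolding schemes_def using InlV by blast

lemma tri_eq:
  assumes "card t = 3" "a \<in> t" "b \<in> t" "j \<in> t" "a \<noteq> b" "b \<noteq> j" "a \<noteq> j"
  shows "t = {a, b, j}"
proof -
  have "finite t" using assms(1) card.infinite by fastforce
  moreover have "{a, b, j} \<subseteq> t" using assms by auto
  moreover have "card {a, b, j} = card t" using assms by auto
  ultimately show ?thesis by (metis card_subset_eq)
qed

lemma in_two:
  assumes n4: "4 \<le> n" and Q: "isQ n rho lam" and b: "b \<in> {1..n}"
    and x: "x \<in> nbrs (levi_adj n) (Inl b)"
  shows "\<exists>j\<in>{1..n}. j \<noteq> b \<and> x \<in> nbrs (levi_adj n) (Inl j) \<and> rho (Inl b) x \<in> nbrs (levi_adj n) (Inl j)
     \<and> {x, rho (Inl b) x} \<in> Aset n rho j"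
proof -
  have sch: "(rho, lam) \<in> schemes (levi_V n) (levi_adj n)" and q: "quadrilateral (levi_adj n) (rho, lam)"
    using Q unfolding isQ_def by auto
  obtain j where j: "j \<in> {1..n}" "j \<noteq> b" "x \<in> nbrs (levi_adj n) (Inl j)"
    "rho (Inl b) x \<in> nbrs (levi_adj n) (Inl j)"
    "rho (Inl j) (rho (Inl b) x) = x \<or> rho (Inl j) x = rho (Inl b) x"
    using sym[OF n4 sch q b x] by blast
  have "{x, rho (Inl b) x} \<in> Aset n rho j"
  proof (cases "rho (Inl j) (rho (Inl b) x) = x")
    case True
    then have "{x, rho (Inl b) x} = {rho (Inl b) x, rho (Inl j) (rho (Inl b) x)}" by auto
    then show ?thesis unfolding Aset_def using j(4) by blast
  next
    case False
    then have "{x, rho (Inl b) x} = {x, rho (Inl j) x}" using j(5) by auto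
    then show ?thesis unfolding Aset_def using j(3) by blast
  qed
  then show ?thesis using j by blast
qed

lemma recover:
  assumes n4: "4 \<le> n" and Q: "isQ n rho lam" and a: "a \<in> {1..n}"
  shows "Aset n rho a = {e \<in> Eset n rho. e \<subseteq> nbrs (levi_adj n) (Inl a)}"
proof (intro set_eqI iffI)
  have sch: "(rho, lam) \<in> schemes (levi_V n) (levi_adj n)" using Q unfolding isQ_def by auto
  fix e assume "e \<in> Aset n rho a"
  then obtain x where x: "x \<in> nbrs (levi_adj n) (Inl a)" "e = {x, rho (Inl a) x}" unfolding Aset_def by blast
  have "rho (Inl a) x \<in> nbrs (levi_adj n) (Inl a)" using cyc_N[OF cycA[OF sch a] x(1)] .
  then show "e \<in> {e \<in> Eset n rho. e \<subseteq> nbrs (levi_adj n) (Inl a)}"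
    using x a \<open>e \<in> Aset n rho a\<close> unfolding Eset_def by blast
next
  have sch: "(rho, lam) \<in> schemes (levi_V n) (levi_adj n)" using Q unfolding isQ_def by auto
  fix e assume e: "e \<in> {e \<in> Eset n rho. e \<subseteq> nbrs (levi_adj n) (Inl a)}"
  then obtain b where b: "b \<in> {1..n}" "e \<in> Aset n rho b" unfolding Eset_def by blast
  show "e \<in> Aset n rho a"
  proof (cases "b = a")
    case True then show ?thesis using b by simp
  next
    case False
    from b obtain x where x: "x \<in> nbrs (levi_adj n) (Inl b)" "e = {x, rho (Inl b) x}" unfolding Aset_def by blast
    obtain j where j: "j \<in> {1..n}" "j \<noteq> b" "x \<in> nbrs (levi_adj n) (Inl j)"
      "rho (Inl b) x \<in> nbrs (levi_adj n) (Inl j)" "{x, rho (Inl b) x} \<in> Aset n rho j"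
      using in_two[OF n4 Q b(1) x(1)] by blast
    have yb: "rho (Inl b) x \<in> nbrs (levi_adj n) (Inl b)" using cyc_N[OF cycA[OF sch b(1)] x(1)] .
    have xy: "rho (Inl b) x \<noteq> x"
      using cyc_fix[OF cycA[OF sch b(1)] _ x(1)] card_nbrs_Inl_ge[OF n4 b(1)] by simp
    obtain t where xt: "x = Inr t" and t: "t \<in> triples n" "b \<in> t"
      using x(1) unfolding nbrs_Inl_eq by blast
    obtain t' where yt: "rho (Inl b) x = Inr t'" and t': "t' \<in> triples n" "b \<in> t'"
      using yb unfolding nbrs_Inl_eq by blast
    have tt: "t \<noteq> t'" using xy xt yt by auto
    have at: "a \<in> t" "a \<in> t'" using e x(2) xt yt by (auto simp: Inr_nbrs_Inl)
    have jt: "j \<in> t" "j \<in> t'" using j(3,4) xt yt by (auto simp: Inr_nbrs_Inl)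
    have "j = a"
    proof (rule ccontr)
      assume ja: "j \<noteq> a"
      have "t = {a, b, j}" using tri_eq[OF T_card[OF t(1)] at(1) t(2) jt(1)] False j(2) ja by auto
      moreover have "t' = {a, b, j}" using tri_eq[OF T_card[OF t'(1)] at(2) t'(2) jt(2)] False j(2) ja by auto
      ultimately show False using tt by simp
    qed
    then show ?thesis using j(5) x(2) by simp
  qed
qed

lemma finite_Aset: "finite (Aset n rho a)"
  unfolding Aset_def using finite_nbrs_Inl by simp

lemma finite_Eset: "finite (Eset n rho)"
  unfolding Eset_def using finite_Aset by simp

lemma card_Aset: "a \<in> {1..n} \<Longrightarrow> 2 * card (Aset n rho a) \<le> n ^ 2"
proof -
  assume a: "a \<in> {1..n}"
  have "card (Aset n rho a) \<le> card (nbrs (levi_adj n) (Inl a))"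
    unfolding Aset_def by (rule card_image_le[OF finite_nbrs_Inl])
  also have "\<dots> = (n - 1) * (n - 1 - 1) div 2" using card_nbrs_Inl[OF a] choose_two by simp
  finally have "2 * card (Aset n rho a) \<le> (n - 1) * (n - 1 - 1)" by linarith
  also have "\<dots> \<le> n * n" by (intro mult_le_mono) auto
  finally show ?thesis by (simp add: power2_eq_square)
qed

lemma card_Eset:
  assumes n4: "4 \<le> n" and Q: "isQ n rho lam"
  shows "4 * card (Eset n rho) \<le> n ^ 3"
proof -
  define E where "E = Eset n rho"
  have fE: "finite E" unfolding E_def by (rule finite_Eset)
  have sub: "a \<in> {1..n} \<Longrightarrow> Aset n rho a \<subseteq> E" for a unfolding E_def Eset_def by blast
  have "(\<Sum>a\<in>{1..n}. card (Aset n rho a)) = (\<Sum>a\<in>{1..n}. \<Sum>e\<in>E. if e \<in> Aset n rho a then 1 else 0)"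
  proof (rule sum.cong[OF refl])
    fix a assume a: "a \<in> {1..n}"
    have "Aset n rho a = {e \<in> E. e \<in> Aset n rho a}" using sub[OF a] by blast
    then have "card (Aset n rho a) = (\<Sum>e\<in>{e \<in> E. e \<in> Aset n rho a}. 1)" by simp
    also have "\<dots> = (\<Sum>e\<in>E. if e \<in> Aset n rho a then 1 else 0)"
      by (rule sum.inter_filter[OF fE])
    finally show "card (Aset n rho a) = (\<Sum>e\<in>E. if e \<in> Aset n rho a then 1 else 0)" .
  qed
  also have "\<dots> = (\<Sum>e\<in>E. \<Sum>a\<in>{1..n}. if e \<in> Aset n rho a then 1 else 0)" by (rule sum.swap)
  also have "\<dots> = (\<Sum>e\<in>E. card {a \<in> {1..n}. e \<in> Aset n rho a})"
  proof (rule sum.cong[OF refl])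
    fix e
    have "card {a \<in> {1..n}. e \<in> Aset n rho a} = (\<Sum>a\<in>{a \<in> {1..n}. e \<in> Aset n rho a}. 1)" by simp
    also have "\<dots> = (\<Sum>a\<in>{1..n}. if e \<in> Aset n rho a then 1 else 0)"
      by (rule sum.inter_filter) simp
    finally show "(\<Sum>a\<in>{1..n}. if e \<in> Aset n rho a then 1 else 0) = card {a \<in> {1..n}. e \<in> Aset n rho a}" by simp
  qed
  finally have eq: "(\<Sum>a\<in>{1..n}. card (Aset n rho a)) = (\<Sum>e\<in>E. card {a \<in> {1..n}. e \<in> Aset n rho a})" .
  have ge2: "2 \<le> card {a \<in> {1..n}. e \<in> Aset n rho a}" if e: "e \<in> E" for e
  proof -
    from e obtain b where b: "b \<in> {1..n}" "e \<in> Aset n rho b" unfolding E_def Eset_def by blast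
    then obtain x where x: "x \<in> nbrs (levi_adj n) (Inl b)" "e = {x, rho (Inl b) x}" unfolding Aset_def by blast
    obtain j where j: "j \<in> {1..n}" "j \<noteq> b" "{x, rho (Inl b) x} \<in> Aset n rho j"
      using in_two[OF n4 Q b(1) x(1)] by blast
    have "{b, j} \<subseteq> {a \<in> {1..n}. e \<in> Aset n rho a}" using b j x(2) by auto
    then have "card {b, j} \<le> card {a \<in> {1..n}. e \<in> Aset n rho a}" by (intro card_mono) auto
    then show ?thesis using j(2) by simp
  qed
  have "2 * card E = (\<Sum>e\<in>E. 2)" by simp
  also have "\<dots> \<le> (\<Sum>e\<in>E. card {a \<in> {1..n}. e \<in> Aset n rho a})" by (rule sum_mono) (rule ge2)
  also have "\<dots> = (\<Sum>a\<in>{1..n}. card (Aset n rho a))" using eq by simp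
  finally have "2 * (2 * card E) \<le> 2 * (\<Sum>a\<in>{1..n}. card (Aset n rho a))" by simp
  then have "4 * card E \<le> (\<Sum>a\<in>{1..n}. 2 * card (Aset n rho a))" by (simp add: sum_distrib_left)
  also have "\<dots> \<le> (\<Sum>a\<in>{1..n}. n ^ 2)" by (rule sum_mono) (rule card_Aset)
  also have "\<dots> = n ^ 3" by (simp add: power_numeral_reduce)
  finally show ?thesis unfolding E_def .
qed


lemma binom_bound: "real (c choose k) \<le> real c ^ k / fact k"
proof (cases "k \<le> c")
  case True
  have "fact k * fact (c - k) * (c choose k) = fact c" using binomial_fact_lemma[OF True] .
  then have h: "fact c = ((c choose k) * fact k) * fact (c - k)" by (simp add: algebra_simps)
  have "(c choose k) * fact k = fact c div fact (c - k)"
    by (subst h) simp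
  also have "\<dots> \<le> c ^ k" using fact_div_fact_le_pow[OF True] .
  finally have "real ((c choose k) * fact k) \<le> real (c ^ k)" by (simp only: of_nat_le_iff)
  then have "real (c choose k) * fact k \<le> real c ^ k" by simp
  then show ?thesis by (simp add: field_simps)
next
  case False
  then have "real (c choose k) = 0" using binomial_eq_0[of c k] by simp
  moreover have "0 \<le> real c ^ k / fact k" by (intro divide_nonneg_nonneg) auto
  ultimately show ?thesis by linarith
qed

lemma exp_partial: "0 \<le> x \<Longrightarrow> (\<Sum>k<m. x ^ k / fact k) \<le> exp (x::real)"
proof -
  assume x: "0 \<le> x"
  obtain t where "exp x = (\<Sum>k<m. x ^ k / fact k) + exp t / fact m * x ^ m"
    using Maclaurin_exp_le[of x m] by blast
  moreover have "0 \<le> exp t / fact m * x ^ m" using x by simp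
  ultimately show ?thesis by linarith
qed

lemma count_subsets:
  assumes fU: "finite U" and cU: "real (card U) \<le> u" and x0: "0 < x" and xu: "x \<le> u"
    and my: "real m \<le> y"
  shows "real (card {E. E \<subseteq> U \<and> card E \<le> m}) \<le> (u / x) powr y * exp x"
proof -
  have eq: "{E. E \<subseteq> U \<and> card E \<le> m} = (\<Union>k\<in>{..m}. {E. E \<subseteq> U \<and> card E = k})" by auto
  have fin: "\<forall>k\<in>{..m}. finite {E. E \<subseteq> U \<and> card E = k}"
    using fU by (auto intro: finite_subset[of _ "Pow U"])
  have "card {E. E \<subseteq> U \<and> card E \<le> m} \<le> (\<Sum>k\<in>{..m}. card {E. E \<subseteq> U \<and> card E = k})"
    unfolding eq by (rule card_UN_le) (auto simp: fin)
  also have "\<dots> = (\<Sum>k\<in>{..m}. card U choose k)" using n_subsets[OF fU] by simp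
  finally have "real (card {E. E \<subseteq> U \<and> card E \<le> m}) \<le> (\<Sum>k\<in>{..m}. real (card U choose k))"
    by (metis of_nat_le_iff of_nat_sum)
  also have "\<dots> \<le> (\<Sum>k\<in>{..m}. (u / x) powr y * (x ^ k / fact k))"
  proof (rule sum_mono)
    fix k assume k: "k \<in> {..m}"
    have u0: "0 \<le> real (card U)" by simp
    have "real (card U choose k) \<le> real (card U) ^ k / fact k" by (rule binom_bound)
    also have "\<dots> \<le> u ^ k / fact k"
      by (intro divide_right_mono power_mono cU u0) simp
    also have "u ^ k = (u / x) ^ k * x ^ k" using x0 by (simp add: power_divide)
    also have "(u / x) ^ k = (u / x) powr (real k)" using x0 xu by (simp add: powr_realpow)
    also have "(u / x) powr (real k) \<le> (u / x) powr y"
      using k my x0 xu by (intro powr_mono) auto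
    finally show "real (card U choose k) \<le> (u / x) powr y * (x ^ k / fact k)"
      using x0 by (simp add: divide_right_mono mult_right_mono)
  qed
  also have "\<dots> = (u / x) powr y * (\<Sum>k<Suc m. x ^ k / fact k)"
    by (simp add: sum_distrib_left lessThan_Suc_atMost)
  also have "\<dots> \<le> (u / x) powr y * exp x"
  proof (rule mult_left_mono)
    show "(\<Sum>k<Suc m. x ^ k / fact k) \<le> exp x" by (rule exp_partial) (use x0 in simp)
  qed simp
  finally show ?thesis .
qed

definition Uset :: "nat \<Rightarrow> (nat + nat set) set set" where
  "Uset n = (\<lambda>((t, b), c). {Inr t, Inr (insert c (t - {b}))}) ` ((SIGMA t:triples n. t) \<times> {1..n})"

lemma card_T: "card (triples n) = n choose 3"
  unfolding triples_def using n_subsets[of "{1..n}" 3] by simp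

lemma card_T_le: "4 \<le> n \<Longrightarrow> card (triples n) \<le> n ^ 3"
  unfolding card_T by (rule binomial_le_pow) simp

lemma card_Sigma_T: "card (SIGMA t:triples n. t) = 3 * card (triples n)"
proof -
  have "card (SIGMA t:triples n. t) = (\<Sum>t\<in>triples n. card t)"
    by (rule card_SigmaI) (auto simp: finite_T T_fin)
  also have "\<dots> = (\<Sum>t\<in>triples n. 3)" by (rule sum.cong) (auto simp: T_card)
  finally show ?thesis by simp
qed

lemma finite_Uset: "finite (Uset n)"
  unfolding Uset_def using finite_T T_fin by (intro finite_imageI finite_cartesian_product finite_SigmaI) auto

lemma card_Uset: "4 \<le> n \<Longrightarrow> card (Uset n) \<le> 3 * n ^ 4"
proof -
  assume n4: "4 \<le> n"
  have "card (Uset n) \<le> card ((SIGMA t:triples n. t) \<times> {1..n})"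
    unfolding Uset_def using finite_T T_fin by (intro card_image_le finite_cartesian_product finite_SigmaI) auto
  also have "\<dots> = 3 * card (triples n) * n" by (simp add: card_cartesian_product card_Sigma_T)
  also have "\<dots> \<le> 3 * n ^ 3 * n" using card_T_le[OF n4] by simp
  finally show ?thesis by (simp add: power_numeral_reduce)
qed

lemma Eset_sub_U:
  assumes n4: "4 \<le> n" and Q: "isQ n rho lam"
  shows "Eset n rho \<subseteq> Uset n"
proof
  have sch: "(rho, lam) \<in> schemes (levi_V n) (levi_adj n)" using Q unfolding isQ_def by auto
  fix e assume "e \<in> Eset n rho"
  then obtain a where a: "a \<in> {1..n}" "e \<in> Aset n rho a" unfolding Eset_def by blast
  then obtain x where x: "x \<in> nbrs (levi_adj n) (Inl a)" "e = {x, rho (Inl a) x}" unfolding Aset_def by blast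
  obtain j where j: "j \<in> {1..n}" "j \<noteq> a" "x \<in> nbrs (levi_adj n) (Inl j)"
    "rho (Inl a) x \<in> nbrs (levi_adj n) (Inl j)"
    using in_two[OF n4 Q a(1) x(1)] by blast
  have ya: "rho (Inl a) x \<in> nbrs (levi_adj n) (Inl a)" using cyc_N[OF cycA[OF sch a(1)] x(1)] .
  obtain t where xt: "x = Inr t" and t: "t \<in> triples n" "a \<in> t"
    using x(1) unfolding nbrs_Inl_eq by blast
  obtain t' where yt: "rho (Inl a) x = Inr t'" and t': "t' \<in> triples n" "a \<in> t'"
    using ya unfolding nbrs_Inl_eq by blast
  have jt: "j \<in> t" "j \<in> t'" using j(3,4) xt yt by (auto simp: Inr_nbrs_Inl)
  have ex3: "\<exists>b\<in>s. b \<noteq> a \<and> b \<noteq> j" if "s \<in> triples n" for s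
  proof (rule ccontr)
    assume "\<not> (\<exists>b\<in>s. b \<noteq> a \<and> b \<noteq> j)"
    then have "s \<subseteq> {a, j}" by auto
    then have "card s \<le> card {a, j}" by (intro card_mono) auto
    also have "\<dots> \<le> 2" by (simp add: card_insert_le_m1)
    finally show False using T_card[OF that] by simp
  qed
  obtain b where b: "b \<in> t" "b \<noteq> a" "b \<noteq> j" using ex3[OF t(1)] by blast
  obtain c where c: "c \<in> t'" "c \<noteq> a" "c \<noteq> j" using ex3[OF t'(1)] by blast
  have teq: "t = {a, j, b}" using tri_eq[OF T_card[OF t(1)] t(2) jt(1) b(1)] b j(2) by auto
  have t'eq: "t' = {a, j, c}" using tri_eq[OF T_card[OF t'(1)] t'(2) jt(2) c(1)] c j(2) by auto
  have "insert c (t - {b}) = t'" using teq t'eq b by auto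
  moreover have "c \<in> {1..n}" using c(1) T_sub[OF t'(1)] by blast
  ultimately have "((t, b), c) \<in> (SIGMA t:triples n. t) \<times> {1..n}
     \<and> e = (\<lambda>((t, b), c). {Inr t, Inr (insert c (t - {b}))}) ((t, b), c)"
    using t(1) b(1) x(2) xt yt by auto
  then show "e \<in> Uset n" unfolding Uset_def by blast
qed


section \<open>Encoding\<close>

definition t0 :: "nat \<Rightarrow> nat \<Rightarrow> nat + nat set" where
  "t0 n a = (SOME x. x \<in> nbrs (levi_adj n) (Inl a))"

definition LE :: "nat \<Rightarrow> ((nat + nat set) \<times> (nat + nat set)) set" where
  "LE n = {(u, v). levi_adj n u v}"

definition Phi where
  "Phi n sch = (case sch of (rho, lam) \<Rightarrow>
     (Eset n rho, restrict (\<lambda>a. rho (Inl a) (t0 n a)) {1..n}, restrict rho (Inr ` triples n),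
      restrict (\<lambda>p. lam (fst p) (snd p)) (LE n)))"

definition Qs :: "nat \<Rightarrow> ((nat + nat set \<Rightarrow> nat + nat set \<Rightarrow> nat + nat set) \<times> (nat + nat set \<Rightarrow> nat + nat set \<Rightarrow> bool)) set" where
  "Qs n = {sch \<in> schemes (levi_V n) (levi_adj n). quadrilateral (levi_adj n) sch}"

lemma t0_in: "4 \<le> n \<Longrightarrow> a \<in> {1..n} \<Longrightarrow> t0 n a \<in> nbrs (levi_adj n) (Inl a)"
proof -
  assume "4 \<le> n" "a \<in> {1..n}"
  then have "3 \<le> card (nbrs (levi_adj n) (Inl a))" by (rule card_nbrs_Inl_ge)
  then have "nbrs (levi_adj n) (Inl a) \<noteq> {}" by auto
  then show ?thesis unfolding t0_def by (meson ex_in_conv someI_ex)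
qed

lemma Qs_isQ: "(rho, lam) \<in> Qs n \<Longrightarrow> isQ n rho lam"
  unfolding Qs_def isQ_def by simp

lemma inj_Phi:
  assumes n4: "4 \<le> n"
  shows "inj_on (Phi n) (Qs n)"
proof (rule inj_onI)
  fix sch1 sch2 assume s1: "sch1 \<in> Qs n" and s2: "sch2 \<in> Qs n" and eq: "Phi n sch1 = Phi n sch2"
  obtain rho lam where sch1: "sch1 = (rho, lam)" by (cases sch1)
  obtain rho' lam' where sch2: "sch2 = (rho', lam')" by (cases sch2)
  have Q1: "isQ n rho lam" using s1 sch1 Qs_isQ by simp
  have Q2: "isQ n rho' lam'" using s2 sch2 Qs_isQ by simp
  have S1: "(rho, lam) \<in> schemes (levi_V n) (levi_adj n)" using Q1 unfolding isQ_def by simp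
  have S2: "(rho', lam') \<in> schemes (levi_V n) (levi_adj n)" using Q2 unfolding isQ_def by simp
  have eE: "Eset n rho = Eset n rho'"
    and e1: "restrict (\<lambda>a. rho (Inl a) (t0 n a)) {1..n} = restrict (\<lambda>a. rho' (Inl a) (t0 n a)) {1..n}"
    and e2: "restrict rho (Inr ` triples n) = restrict rho' (Inr ` triples n)"
    and e3: "restrict (\<lambda>p. lam (fst p) (snd p)) (LE n) = restrict (\<lambda>p. lam' (fst p) (snd p)) (LE n)"
    using eq unfolding sch1 sch2 Phi_def by auto
  have "rho v = rho' v" for v
  proof (cases "v \<in> levi_V n")
    case False
    then show ?thesis using S1 S2 unfolding schemes_def by auto
  next
    case True
    then consider a where "a \<in> {1..n}" "v = Inl a" | t where "t \<in> triples n" "v = Inr t"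
      unfolding levi_V_def by blast
    then show ?thesis
    proof cases
      case 1
      have "(\<lambda>x. {x, rho (Inl a) x}) ` nbrs (levi_adj n) (Inl a) = Aset n rho a" unfolding Aset_def ..
      also have "\<dots> = {e \<in> Eset n rho. e \<subseteq> nbrs (levi_adj n) (Inl a)}" by (rule recover[OF n4 Q1 1(1)])
      also have "\<dots> = Aset n rho' a" using recover[OF n4 Q2 1(1)] eE by simp
      finally have AA: "(\<lambda>x. {x, rho (Inl a) x}) ` nbrs (levi_adj n) (Inl a) = (\<lambda>x. {x, rho' (Inl a) x}) ` nbrs (levi_adj n) (Inl a)"
        unfolding Aset_def .
      have "rho (Inl a) (t0 n a) = rho' (Inl a) (t0 n a)" using fun_cong[OF e1, of a] 1(1) by simp
      then have "rho (Inl a) = rho' (Inl a)"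
        using uniq[OF cycA[OF S1 1(1)] cycA[OF S2 1(1)] card_nbrs_Inl_ge[OF n4 1(1)] AA t0_in[OF n4 1(1)]] by simp
      then show ?thesis using 1 by simp
    next
      case 2
      then show ?thesis using fun_cong[OF e2, of v] by simp
    qed
  qed
  then have "rho = rho'" by blast
  moreover have "lam u v = lam' u v" for u v
  proof (cases "levi_adj n u v")
    case True
    then have "(u, v) \<in> LE n" unfolding LE_def by simp
    then show ?thesis using fun_cong[OF e3, of "(u, v)"] by simp
  next
    case False
    then show ?thesis using S1 S2 unfolding schemes_def by auto
  qed
  then have "lam = lam'" by blast
  ultimately show "sch1 = sch2" using sch1 sch2 by simp
qed

definition XE where "XE n = {E. E \<subseteq> Uset n \<and> card E \<le> n ^ 3 div 4}"
definition X1 where "X1 n = PiE {1..n} (\<lambda>a. nbrs (levi_adj n) (Inl a))"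
definition X2 where "X2 n = PiE (Inr ` triples n) (\<lambda>v. {f. f permutes nbrs (levi_adj n) v})"
definition X3 where "X3 n = PiE (LE n) (\<lambda>_. (UNIV :: bool set))"

lemma Phi_into:
  assumes n4: "4 \<le> n"
  shows "Phi n ` Qs n \<subseteq> XE n \<times> X1 n \<times> X2 n \<times> X3 n"
proof
  fix z assume "z \<in> Phi n ` Qs n"
  then obtain rho lam where s: "(rho, lam) \<in> Qs n" and z: "z = Phi n (rho, lam)" by auto
  have Q: "isQ n rho lam" using s Qs_isQ by simp
  have S: "(rho, lam) \<in> schemes (levi_V n) (levi_adj n)" using Q unfolding isQ_def by simp
  have "4 * card (Eset n rho) \<le> n ^ 3" by (rule card_Eset[OF n4 Q])
  then have "card (Eset n rho) \<le> n ^ 3 div 4" by simp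
  then have a: "Eset n rho \<in> XE n" unfolding XE_def using Eset_sub_U[OF n4 Q] by simp
  have b: "restrict (\<lambda>a. rho (Inl a) (t0 n a)) {1..n} \<in> X1 n"
    unfolding X1_def
  proof (unfold restrict_PiE_iff, intro ballI)
    fix a assume a: "a \<in> {1..n}"
    show "rho (Inl a) (t0 n a) \<in> nbrs (levi_adj n) (Inl a)" using cyc_N[OF cycA[OF S a] t0_in[OF n4 a]] .
  qed
  have c: "restrict rho (Inr ` triples n) \<in> X2 n"
    unfolding X2_def
  proof (unfold restrict_PiE_iff, intro ballI CollectI)
    fix v :: "nat + nat set" assume "v \<in> Inr ` triples n"
    then have "v \<in> levi_V n" unfolding levi_V_def by blast
    then have "cyclic_perm_on (nbrs (levi_adj n) v) (rho v)" using S unfolding schemes_def by blast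
    then show "rho v permutes nbrs (levi_adj n) v"
      unfolding cyclic_perm_on_def by (intro bij_imp_permutes) auto
  qed
  have d: "restrict (\<lambda>p. lam (fst p) (snd p)) (LE n) \<in> X3 n" unfolding X3_def by simp
  show "z \<in> XE n \<times> X1 n \<times> X2 n \<times> X3 n" using a b c d z unfolding Phi_def by simp
qed


section \<open>Cardinalities of the code sets\<close>

lemma finite_LE: "finite (LE n)"
proof -
  have "LE n \<subseteq> levi_V n \<times> levi_V n" unfolding LE_def levi_adj_def levi_V_def by auto
  moreover have "finite (levi_V n)" unfolding levi_V_def using finite_T by simp
  ultimately show ?thesis by (meson finite_SigmaI finite_subset)
qed

lemma card_LE: "4 \<le> n \<Longrightarrow> card (LE n) \<le> 6 * n ^ 3"
proof -
  assume n4: "4 \<le> n"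
  define g :: "(nat set \<times> nat) \<times> bool \<Rightarrow> (nat + nat set) \<times> (nat + nat set)" where
    "g = (\<lambda>((t, i), b). if b then (Inl i, Inr t) else (Inr t, Inl i))"
  have "LE n \<subseteq> g ` ((SIGMA t:triples n. t) \<times> UNIV)"
  proof
    fix p assume "p \<in> LE n"
    then obtain u v where p: "p = (u, v)" "levi_adj n u v" unfolding LE_def by blast
    then obtain i t where it: "i \<in> {1..n}" "t \<in> triples n" "i \<in> t"
      "(u = Inl i \<and> v = Inr t) \<or> (u = Inr t \<and> v = Inl i)" unfolding levi_adj_def by blast
    show "p \<in> g ` ((SIGMA t:triples n. t) \<times> UNIV)"
    proof (cases "u = Inl i \<and> v = Inr t")
      case True
      then have "p = g ((t, i), True)" using p unfolding g_def by simp
      then show ?thesis using it by blast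
    next
      case False
      then have "p = g ((t, i), False)" using p it unfolding g_def by auto
      then show ?thesis using it by blast
    qed
  qed
  then have "card (LE n) \<le> card (g ` ((SIGMA t:triples n. t) \<times> (UNIV :: bool set)))"
    using finite_T T_fin by (intro card_mono finite_imageI finite_cartesian_product finite_SigmaI) auto
  also have "\<dots> \<le> card ((SIGMA t:triples n. t) \<times> (UNIV :: bool set))"
    using finite_T T_fin by (intro card_image_le finite_cartesian_product finite_SigmaI) auto
  also have "\<dots> = 3 * card (triples n) * 2" by (simp add: card_cartesian_product card_Sigma_T)
  also have "\<dots> \<le> 3 * n ^ 3 * 2" using card_T_le[OF n4] by simp
  finally show ?thesis by simp
qed

lemma finite_XE: "finite (XE n)"
  unfolding XE_def using finite_Uset by (auto intro: finite_subset[of _ "Pow (Uset n)"])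

lemma finite_X1: "finite (X1 n)"
  unfolding X1_def using finite_nbrs_Inl by (intro finite_PiE) auto

lemma finite_X2: "finite (X2 n)"
  unfolding X2_def using finite_T
  by (intro finite_PiE finite_imageI) (auto intro!: finite_permutations simp: nbrs_Inr_eq T_fin)

lemma finite_X3: "finite (X3 n)"
  unfolding X3_def using finite_LE by (intro finite_PiE) auto

lemma card_X1: "4 \<le> n \<Longrightarrow> card (X1 n) \<le> (n ^ 3) ^ n"
proof -
  assume n4: "4 \<le> n"
  have "card (X1 n) = (\<Prod>a\<in>{1..n}. card (nbrs (levi_adj n) (Inl a)))"
    unfolding X1_def by (simp add: card_PiE)
  also have "\<dots> \<le> (n ^ 3) ^ n"
  proof (rule prod_le_power)
    fix a assume "a \<in> {1..n}"
    have "card (nbrs (levi_adj n) (Inl a)) \<le> card {t \<in> triples n. a \<in> t}"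
      unfolding nbrs_Inl_eq by (rule card_image_le) (simp add: finite_T)
    also have "\<dots> \<le> card (triples n)" by (rule card_mono[OF finite_T]) auto
    also have "\<dots> \<le> n ^ 3" by (rule card_T_le[OF n4])
    finally show "0 \<le> card (nbrs (levi_adj n) (Inl a)) \<and> card (nbrs (levi_adj n) (Inl a)) \<le> n ^ 3" by simp
  next
    show "card {1..n} \<le> n" by simp
    show "1 \<le> n ^ 3" using n4 by simp
  qed
  finally show ?thesis .
qed

lemma card_X2: "4 \<le> n \<Longrightarrow> card (X2 n) \<le> 6 ^ (n ^ 3)"
proof -
  assume n4: "4 \<le> n"
  have "card (X2 n) = (\<Prod>v\<in>Inr ` triples n. card {f. f permutes nbrs (levi_adj n) v})"
    unfolding X2_def using finite_T by (simp add: card_PiE)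
  also have "\<dots> = (\<Prod>v\<in>(Inr ` triples n :: (nat + nat set) set). 6)"
  proof (rule prod.cong[OF refl])
    fix v assume "v \<in> (Inr ` triples n :: (nat + nat set) set)"
    then obtain t where "t \<in> triples n" "v = Inr t" by blast
    then have "card (nbrs (levi_adj n) v) = 3" "finite (nbrs (levi_adj n) v)"
      using card_nbrs_Inr by (auto simp: nbrs_Inr_eq T_fin)
    then show "card {f. f permutes nbrs (levi_adj n) v} = 6"
      using card_permutations[of "nbrs (levi_adj n) v" 3] by (simp add: fact_numeral)
  qed
  also have "\<dots> = 6 ^ card (triples n)" by (simp add: card_image)
  also have "\<dots> \<le> 6 ^ (n ^ 3)" using card_T_le[OF n4] by (intro power_increasing) auto
  finally show ?thesis .
qed

lemma card_X3: "4 \<le> n \<Longrightarrow> card (X3 n) \<le> 2 ^ (6 * n ^ 3)"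
proof -
  assume n4: "4 \<le> n"
  have "card (X3 n) = 2 ^ card (LE n)"
    unfolding X3_def using finite_LE by (simp add: card_PiE)
  also have "\<dots> \<le> 2 ^ (6 * n ^ 3)" using card_LE[OF n4] by (intro power_increasing) auto
  finally show ?thesis .
qed

lemma card_XE: "4 \<le> n \<Longrightarrow> real (card (XE n)) \<le> (12 * real n) powr (real n ^ 3 / 4) * exp (real n ^ 3 / 4)"
proof -
  assume n4: "4 \<le> n"
  have cU: "real (card (Uset n)) \<le> 3 * real n ^ 4"
    using card_Uset[OF n4] by (metis of_nat_le_iff of_nat_mult of_nat_numeral of_nat_power)
  have x0: "0 < real n ^ 3 / 4" using n4 by simp
  have xu: "real n ^ 3 / 4 \<le> 3 * real n ^ 4"
  proof -
    have "real n ^ 3 * 1 \<le> real n ^ 3 * (12 * real n)" using n4 by (intro mult_left_mono) auto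
    then show ?thesis by (simp add: power_numeral_reduce field_simps)
  qed
  have "4 * (n ^ 3 div 4) \<le> n ^ 3" by simp
  then have "real (4 * (n ^ 3 div 4)) \<le> real (n ^ 3)" by (simp only: of_nat_le_iff)
  then have my: "real (n ^ 3 div 4) \<le> real n ^ 3 / 4" by simp
  have "real (card (XE n)) \<le> (3 * real n ^ 4 / (real n ^ 3 / 4)) powr (real n ^ 3 / 4) * exp (real n ^ 3 / 4)"
    unfolding XE_def by (rule count_subsets[OF finite_Uset cU x0 xu my])
  also have "3 * real n ^ 4 / (real n ^ 3 / 4) = 12 * real n" using n4 by (simp add: power_numeral_reduce field_simps)
  finally show ?thesis .
qed

lemma card_Qs:
  assumes n4: "4 \<le> n"
  shows "real (card (Qs n)) \<le> (12 * real n) powr (real n ^ 3 / 4) * exp (real n ^ 3 / 4)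
     * (real n ^ 3) ^ n * 6 ^ (n ^ 3) * 2 ^ (6 * n ^ 3)"
proof -
  define X where "X = XE n \<times> X1 n \<times> X2 n \<times> X3 n"
  have fX: "finite X" unfolding X_def using finite_XE finite_X1 finite_X2 finite_X3 by simp
  have "card (Qs n) \<le> card X"
    using card_inj_on_le[OF inj_Phi[OF n4] Phi_into[OF n4] ] fX unfolding X_def by simp
  also have "card X = card (XE n) * (card (X1 n) * (card (X2 n) * card (X3 n)))"
    unfolding X_def by (simp add: card_cartesian_product)
  finally have "real (card (Qs n)) \<le> real (card (XE n)) * (real (card (X1 n)) * (real (card (X2 n)) * real (card (X3 n))))"
    by (metis of_nat_le_iff of_nat_mult)
  also have "\<dots> \<le> ((12 * real n) powr (real n ^ 3 / 4) * exp (real n ^ 3 / 4)) * ((real n ^ 3) ^ n * (6 ^ (n ^ 3) * 2 ^ (6 * n ^ 3)))"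
  proof (intro mult_mono)
    show "real (card (XE n)) \<le> (12 * real n) powr (real n ^ 3 / 4) * exp (real n ^ 3 / 4)" by (rule card_XE[OF n4])
    show "real (card (X1 n)) \<le> (real n ^ 3) ^ n"
      using card_X1[OF n4] by (metis of_nat_le_iff of_nat_power)
    show "real (card (X2 n)) \<le> 6 ^ (n ^ 3)"
      using card_X2[OF n4] by (metis of_nat_le_iff of_nat_power of_nat_numeral)
    show "real (card (X3 n)) \<le> 2 ^ (6 * n ^ 3)"
      using card_X3[OF n4] by (metis of_nat_le_iff of_nat_power of_nat_numeral)
  qed auto
  finally show ?thesis by (simp add: mult.assoc)
qed


lemma num_le_Qs:
  assumes n4: "4 \<le> n"
  shows "num_quad_embeddings (levi_V n) (levi_adj n) \<le> card (Qs n)"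
proof -
  have fQ: "finite (Qs n)"
    using inj_on_finite[OF inj_Phi[OF n4] Phi_into[OF n4]] finite_XE finite_X1 finite_X2 finite_X3 by simp
  have "num_quad_embeddings (levi_V n) (levi_adj n) = card (Qs n // emb_equiv (levi_V n) (levi_adj n))"
    unfolding num_quad_embeddings_def Qs_def ..
  also have "Qs n // emb_equiv (levi_V n) (levi_adj n) = (\<lambda>x. emb_equiv (levi_V n) (levi_adj n) `` {x}) ` Qs n"
    unfolding quotient_def by blast
  also have "card \<dots> \<le> card (Qs n)" by (rule card_image_le[OF fQ])
  finally show ?thesis .
qed

lemma log_B:
  assumes n4: "4 \<le> n"
  shows "log 2 ((12 * real n) powr (real n ^ 3 / 4) * exp (real n ^ 3 / 4)
     * (real n ^ 3) ^ n * 6 ^ (n ^ 3) * 2 ^ (6 * n ^ 3))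
   = real n ^ 3 / 4 * log 2 (12 * real n) + real n ^ 3 / 4 / ln 2 + real n * (3 * log 2 (real n))
     + real n ^ 3 * log 2 6 + 6 * real n ^ 3"
proof -
  have n0: "0 < real n" using n4 by simp
  have p1: "0 < (12 * real n) powr (real n ^ 3 / 4)" using n0 by simp
  have p2: "0 < exp (real n ^ 3 / 4)" by simp
  have p3: "0 < (real n ^ 3) ^ n" using n0 by simp
  have p4: "0 < (6::real) ^ (n ^ 3)" by simp
  have p5: "0 < (2::real) ^ (6 * n ^ 3)" by simp
  have "log 2 ((12 * real n) powr (real n ^ 3 / 4) * exp (real n ^ 3 / 4)
     * (real n ^ 3) ^ n * 6 ^ (n ^ 3) * 2 ^ (6 * n ^ 3))
     = log 2 ((12 * real n) powr (real n ^ 3 / 4)) + log 2 (exp (real n ^ 3 / 4))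
     + log 2 ((real n ^ 3) ^ n) + log 2 ((6::real) ^ (n ^ 3)) + log 2 ((2::real) ^ (6 * n ^ 3))"
    using p1 p2 p3 p4 p5 by (simp add: log_mult_pos)
  also have "log 2 ((12 * real n) powr (real n ^ 3 / 4)) = real n ^ 3 / 4 * log 2 (12 * real n)"
    by (rule log_powr)
  also have "log 2 (exp (real n ^ 3 / 4)) = real n ^ 3 / 4 / ln 2" by simp
  also have "log 2 ((real n ^ 3) ^ n) = real n * (3 * log 2 (real n))"
    using n0 by (simp add: log_nat_power)
  also have "log 2 ((6::real) ^ (n ^ 3)) = real n ^ 3 * log 2 6"
    by (simp add: log_nat_power)
  also have "log 2 ((2::real) ^ (6 * n ^ 3)) = 6 * real n ^ 3"
    by (simp add: log_nat_power)
  finally show ?thesis .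
qed

theorem lemma4p1:
  shows "\<exists>eps :: nat \<Rightarrow> real. eps \<longlonglongrightarrow> 0 \<and>
    (\<forall>n::nat. n \<ge> 4 \<longrightarrow>
       real (num_quad_embeddings (levi_V n) (levi_adj n))
         \<le> 2 powr ((1/4 + eps n) * real n ^ 3 * log 2 (real n)))"
proof -
  define L where "L n = real n ^ 3 / 4 * log 2 (12 * real n) + real n ^ 3 / 4 / ln 2 + real n * (3 * log 2 (real n))
     + real n ^ 3 * log 2 6 + 6 * real n ^ 3" for n :: nat
  define eps where "eps n = L n / (real n ^ 3 * log 2 (real n)) - 1/4" for n :: nat
  have lim: "eps \<longlonglongrightarrow> 0" unfolding eps_def L_def by real_asymp
  have "real (num_quad_embeddings (levi_V n) (levi_adj n))
         \<le> 2 powr ((1/4 + eps n) * real n ^ 3 * log 2 (real n))" if n4: "4 \<le> n" for n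
  proof -
    define B where "B = (12 * real n) powr (real n ^ 3 / 4) * exp (real n ^ 3 / 4)
     * (real n ^ 3) ^ n * 6 ^ (n ^ 3) * 2 ^ (6 * n ^ 3)"
    have B0: "0 < B" unfolding B_def using n4 by simp
    have "real (num_quad_embeddings (levi_V n) (levi_adj n)) \<le> real (card (Qs n))"
      using num_le_Qs[OF n4] by simp
    also have "\<dots> \<le> B" unfolding B_def by (rule card_Qs[OF n4])
    also have "B = 2 powr (log 2 B)" using B0 by simp
    also have "log 2 B = L n" unfolding B_def L_def by (rule log_B[OF n4])
    also have "L n = (1/4 + eps n) * real n ^ 3 * log 2 (real n)"
    proof -
      define D where "D = real n ^ 3 * log 2 (real n)"
      have "0 < ln (real n)" using n4 by (intro ln_gt_zero) simp
      then have "0 < log 2 (real n)" by (simp add: log_def)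
      moreover have "0 < real n ^ 3" using n4 by simp
      ultimately have "0 < D" unfolding D_def by (rule mult_pos_pos[rotated])
      then have D0: "D \<noteq> 0" by simp
      have "(1/4 + eps n) * real n ^ 3 * log 2 (real n) = L n / D * D"
        unfolding eps_def D_def by (simp add: mult.assoc)
      also have "\<dots> = L n" using D0 by simp
      finally show ?thesis by simp
    qed
    finally show ?thesis .
  qed
  then show ?thesis using lim by blast
qed

end
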